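(* Let $F$ be a polynomial with coefficients in $\{-1,0,1\}$ such that $F(x)=(x-1)^k f(x)$, where $k\ge9$ is an integer and $f$ is a polynomial with integer coefficients and $f(1)\neq0$. Then for every positive integer $d\ge(\deg F+2)^{3/2}$ there exists a polynomial $P$ of degree $d(\deg F+2)-1$ with coefficients in $\{-2,-1,0,1,2\}$ and a real root $\alpha<1$ of $P$ such that $|1-\alpha|\le 2d^{-(k+2)}$. *)

theory Defs
  imports "HOL-Analysis.Analysis" "HOL-Computational_Algebra.Polynomial"
begin

end

theory Submission
  imports Defs
begin


lemma coeff_pcomp_monom:
  fixes p :: "'a::comm_semiring_1 poly"
  assumes d: "d > 0"
  shows "coeff (pcompose p (monom 1 d)) j = (if d dvd j then coeff p (j div d) else 0)"
  using d
proof (induction p arbitrary: j)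
  case 0
  then show ?case by simp
next
  case (pCons a p)
  have e: "coeff (pcompose (pCons a p) (monom 1 d)) j =
      (if j = 0 then a else 0) + (if j < d then 0 else coeff (pcompose p (monom 1 d)) (j - d))"
    by (simp add: pcompose_pCons coeff_monom_mult coeff_pCons split: nat.splits)
  show ?case
  proof (cases "j < d")
    case True
    then show ?thesis using e d
      by (cases "j = 0") (auto dest: dvd_imp_le)
  next
    case False
    then have j0: "j \<noteq> 0" using d by auto
    have dv: "d dvd j \<longleftrightarrow> d dvd (j - d)" using False
      by (metis dvd_minus_self le_add_diff_inverse2 not_less dvd_add_right_iff dvd_refl)
    have dd: "(j - d) div d = j div d - 1" using False d
      by (simp add: le_div_geq)
    have jd: "j div d \<noteq> 0" using False d by (auto simp: div_eq_0_iff)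
    show ?thesis using e pCons.IH[OF d, of "j - d"] False j0 dv dd jd
      by (auto simp: coeff_pCons split: nat.splits)
  qed
qed

lemma coeff_lin_pow:
  "coeff ([:1,1:] ^ i :: 'a::comm_semiring_1 poly) j = of_nat (i choose j)"
proof (induction i arbitrary: j)
  case 0
  then show ?case by (cases j) (simp_all add: coeff_1)
next
  case (Suc i)
  have "[:1,1:] ^ Suc i = (([:1,1:] ^ i) :: 'a poly) + pCons 0 ([:1,1:] ^ i)"
    by (simp add: algebra_simps)
  then show ?case using Suc
    by (cases j) (auto simp: coeff_pCons add.commute)
qed

lemma pcompose_power: "pcompose (p ^ n) q = (pcompose p q) ^ n"
  for p q :: "'a::comm_semiring_1 poly"
  by (induction n) (simp_all add: pcompose_1 pcompose_mult)

lemma pcompose_as_sum: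
  fixes p q :: "'a::comm_semiring_1 poly"
  shows "pcompose p q = (\<Sum>i\<le>degree p. smult (coeff p i) (q ^ i))"
proof (cases "p = 0")
  case True
  then show ?thesis by simp
next
  case False
  have deg: "degree (map_poly (\<lambda>x. [:x:]) p) = degree p"
    using False by (intro map_poly_degree_eq) simp
  show ?thesis
    unfolding pcompose_altdef poly_altdef deg
    by (intro sum.cong refl) (simp add: coeff_map_poly)
qed

lemma coeff_taylor:
  fixes p :: "'a::comm_semiring_1 poly"
  shows "coeff (pcompose p [:1,1:]) j = (\<Sum>i\<le>degree p. coeff p i * of_nat (i choose j))"
  by (simp add: pcompose_as_sum coeff_sum coeff_lin_pow)

lemma map_of_int_add: "map_poly (of_int :: int \<Rightarrow> 'a::comm_ring_1) (p + q) = map_poly of_int p + map_poly of_int q"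
  by (rule poly_eqI) (simp add: coeff_map_poly)

lemma map_of_int_mult: "map_poly (of_int :: int \<Rightarrow> 'a::comm_ring_1) (p * q) = map_poly of_int p * map_poly of_int q"
  by (rule poly_eqI) (simp add: coeff_map_poly coeff_mult)

lemma map_of_int_pcompose: "map_poly (of_int :: int \<Rightarrow> 'a::comm_ring_1) (pcompose p q) = pcompose (map_poly of_int p) (map_poly of_int q)"
  by (induction p) (simp_all add: pcompose_pCons map_poly_pCons map_of_int_add map_of_int_mult)

lemma poly_shift_real:
  fixes p :: "int poly"
  shows "poly (map_poly (of_int :: int \<Rightarrow> real) p) (1 + u) = poly (map_poly of_int (pcompose p [:1,1:])) u"
  by (simp add: map_of_int_pcompose poly_pcompose map_poly_pCons)

definition Pc :: "int poly \<Rightarrow> nat \<Rightarrow> int poly" where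
  "Pc F d = monom 1 (2*d-1) * pcompose F (monom 1 d) - smult 2 (monom 1 d * pcompose F (monom 1 d))
     + monom 1 1 * pcompose F (monom 1 d) + monom 1 3 * F - monom 1 2 * F"

lemma Pc_coeff:
  assumes d: "d > 0"
  shows "coeff (Pc F d) i =
    (if 2*d-1 \<le> i then (if d dvd (i-(2*d-1)) then coeff F ((i-(2*d-1)) div d) else 0) else 0)
    - 2 * (if d \<le> i then (if d dvd (i-d) then coeff F ((i-d) div d) else 0) else 0)
    + (if 1 \<le> i then (if d dvd (i-1) then coeff F ((i-1) div d) else 0) else 0)
    + ((if 3 \<le> i then coeff F (i-3) else 0) - (if 2 \<le> i then coeff F (i-2) else 0))"
  using d by (auto simp add: Pc_def coeff_monom_mult coeff_pcomp_monom not_less poly_0_coeff_0 del: coeff_pcompose_0)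

lemma mod_helper:
  assumes "d > (0::nat)" "c \<le> i" "d dvd (i - c)"
  shows "i mod d = c mod d"
proof -
  obtain m where "i - c = d * m" using assms(3) by (auto elim: dvdE)
  then have "i = d * m + c" using assms(2) by simp
  then show ?thesis by simp
qed

lemma Pc_coeff_range:
  assumes d: "d \<ge> degree F + 6"
    and cF: "\<forall>i. coeff F i \<in> {-1, 0, 1}"
  shows "coeff (Pc F d) i \<in> {-2, -1, 0, 1, 2}"
proof -
  define n where "n = degree F"
  have d0: "d > 0" using d by simp
  define a1 where "a1 = (if 2*d-1 \<le> i then (if d dvd (i-(2*d-1)) then coeff F ((i-(2*d-1)) div d) else 0) else 0)"
  define a2 where "a2 = 2 * (if d \<le> i then (if d dvd (i-d) then coeff F ((i-d) div d) else 0) else 0)"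
  define a3 where "a3 = (if 1 \<le> i then (if d dvd (i-1) then coeff F ((i-1) div d) else 0) else 0)"
  define a4 where "a4 = ((if 3 \<le> i then coeff F (i-3) else 0) - (if 2 \<le> i then coeff F (i-2) else 0))"
  have eq: "coeff (Pc F d) i = a1 - a2 + a3 + a4"
    unfolding a1_def a2_def a3_def a4_def Pc_coeff[OF d0] by simp
  have cb: "\<bar>coeff F j\<bar> \<le> 1" for j using cF[rule_format, of j] by auto
  have b1: "\<bar>a1\<bar> \<le> 1" unfolding a1_def using cb by auto
  have b2: "\<bar>a2\<bar> \<le> 2" unfolding a2_def using cb by (auto simp: abs_mult)
  have b3: "\<bar>a3\<bar> \<le> 1" unfolding a3_def using cb by auto
  have b4: "\<bar>a4\<bar> \<le> 2" unfolding a4_def using cb[of "i-3"] cb[of "i-2"]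
    by (auto simp: abs_le_iff)
  have r1: "i mod d = d - 1" if "a1 \<noteq> 0"
  proof -
    have "2*d-1 \<le> i" "d dvd (i-(2*d-1))" using that unfolding a1_def by (auto split: if_splits)
    then have "i mod d = (2*d-1) mod d" using mod_helper[OF d0] by blast
    also have "(2*d-1) = (d - 1) + d" using d0 by simp
    also have "((d - 1) + d) mod d = (d - 1) mod d" by (simp only: mod_add_self2)
    also have "(d - 1) mod d = d - 1" using d0 by simp
    finally show ?thesis .
  qed
  have r2: "i mod d = 0" if "a2 \<noteq> 0"
  proof -
    have "d \<le> i" "d dvd (i-d)" using that unfolding a2_def by (auto split: if_splits)
    then have "i mod d = d mod d" using mod_helper[OF d0] by blast
    then show ?thesis by simp
  qed
  have r3: "i mod d = 1" if "a3 \<noteq> 0"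
  proof -
    have "1 \<le> i" "d dvd (i-1)" using that unfolding a3_def by (auto split: if_splits)
    then have "i mod d = 1 mod d" using mod_helper[OF d0] by blast
    then show ?thesis using d by simp
  qed
  have r4: "2 \<le> i \<and> i \<le> n + 3" if "a4 \<noteq> 0"
  proof (rule ccontr)
    assume "\<not> (2 \<le> i \<and> i \<le> n + 3)"
    then have "i < 2 \<or> i > n + 3" by auto
    then have "a4 = 0" unfolding a4_def n_def by (auto simp: coeff_eq_0)
    then show False using that by simp
  qed
  have r4': "i mod d = i" if "a4 \<noteq> 0" using r4[OF that] d n_def by simp
  have "\<bar>a1 - a2 + a3 + a4\<bar> \<le> 2"
  proof (cases "a1 \<noteq> 0")
    case True
    have "a2 = 0" using r1[OF True] r2 d by fastforce
    moreover have "a3 = 0" using r1[OF True] r3 d by fastforce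
    moreover have "a4 = 0" using r1[OF True] r4 r4' d n_def by fastforce
    ultimately show ?thesis using b1 by simp
  next
    case False
    show ?thesis
    proof (cases "a2 \<noteq> 0")
      case True
      then have "a3 = 0" "a4 = 0" using r2 r3 r4 r4' by fastforce+
      then show ?thesis using b2 False by simp
    next
      case F2: False
      show ?thesis
      proof (cases "a3 \<noteq> 0")
        case True
        then have "a4 = 0" using r3 r4 r4' by fastforce
        then show ?thesis using b3 False F2 by simp
      next
        case F3: False
        then show ?thesis using b4 False F2 by simp
      qed
    qed
  qed
  then show ?thesis unfolding eq by auto
qed

lemma dvd_gt_div:
  assumes "(d::nat) > 0" "d dvd x" "d * n < x"
  shows "n < x div d"
proof -
  obtain m where "x = d * m" using assms(2) by (auto elim: dvdE)
  then show ?thesis using assms by simp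
qed

lemma not_dvd_off:
  assumes "(d::nat) > 0" "0 < r" "r < d"
  shows "\<not> d dvd (d * m + r)"
proof
  assume "d dvd (d * m + r)"
  then have "d dvd r" by (simp add: dvd_add_right_iff)
  then show False using assms by (auto dest: dvd_imp_le)
qed

lemma Pc_degree:
  assumes d: "d \<ge> degree F + 6" and F0: "F \<noteq> 0"
  shows "degree (Pc F d) = d * (degree F + 2) - 1"
proof -
  define n where "n = degree F"
  have d0: "d > 0" using d by simp
  define D where "D = d * n + 2 * d - 1"
  have DD: "d * (degree F + 2) - 1 = D" unfolding D_def n_def by (simp add: algebra_simps)
  have z: "coeff F (x div d) = 0" if "d dvd x" "d * n < x" for x
    using dvd_gt_div[OF d0 that] n_def by (simp add: coeff_eq_0)
  have hi: "coeff (Pc F d) i = 0" if "i > D" for i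
  proof -
    have "d * n < i - (2*d-1)" "d * n < i - d" "d * n < i - 1" "n < i - 3" "n < i - 2"
      using that d unfolding D_def n_def by auto
    then show ?thesis using z that d unfolding Pc_coeff[OF d0] D_def n_def
      by (auto simp: coeff_eq_0)
  qed
  have top: "coeff (Pc F d) D = lead_coeff F"
  proof -
    have e1: "D - (2*d-1) = d * n" unfolding D_def using d0 by simp
    have e2: "D - d = d * n + (d - 1)" unfolding D_def using d0 by simp
    have e3: "D - 1 = d * (n + 1) + (d - 2)" unfolding D_def using d by (simp add: algebra_simps)
    have n2: "\<not> d dvd (D - d)" unfolding e2 by (rule not_dvd_off) (use d in auto)
    have n3: "\<not> d dvd (D - 1)" unfolding e3 by (rule not_dvd_off) (use d in auto)
    have "n < D - 3" "n < D - 2" "2*d-1 \<le> D" "d \<le> D" "1 \<le> D" "3 \<le> D"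
      using d unfolding D_def n_def by (auto simp: algebra_simps)
    then show ?thesis using n2 n3 e1 d0 unfolding Pc_coeff[OF d0] n_def
      by (auto simp: coeff_eq_0)
  qed
  have "degree (Pc F d) \<le> D" using hi by (intro degree_le) auto
  moreover have "D \<le> degree (Pc F d)" using top F0 by (intro le_degree) simp
  ultimately show ?thesis using DD by simp
qed

lemma monom1_pow: "monom (1::'a::comm_semiring_1) a = [:0,1:] ^ a"
  by (simp add: monom_altdef)

lemma ring_id:
  fixes X G F :: "'a::comm_ring_1"
  shows "X^(Suc(2*e)) * G - 2 * (X^(Suc e) * G) + X^1*G + X^3*F - X^2*F
     = X^1*G*(X^e - 1)^2 + X^2*(X-1)*F"
proof -
  have "X^(Suc(2*e)) = X * (X^e * X^e)" by (simp add: mult_2 power_add)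
  moreover have "X^3 = X * (X * X)" by (simp add: power3_eq_cube)
  ultimately show ?thesis by (simp add: power2_eq_square algebra_simps)
qed

lemma Pc_factored:
  assumes d: "d > 0"
  shows "Pc F d = monom 1 1 * pcompose F (monom 1 d) * (monom 1 (d-1) - 1)^2 + monom 1 2 * [:-1,1:] * F"
proof -
  obtain e where e: "d = Suc e" using d by (cases d) auto
  have m: "2 * Suc e - 1 = Suc (2 * e)" by simp
  have l: "[:-1,1:] = [:0,1:] - (1::int poly)" by (simp add: one_pCons)
  have s2: "smult 2 p = 2 * p" for p :: "int poly" by (simp add: numeral_mult_conv_smult)
  show ?thesis unfolding Pc_def e m monom1_pow l s2 diff_Suc_1
    by (rule ring_id)
qed

lemma shift_ex:
  "\<exists>h. [:1,1:] ^ a - 1 = [:0,1:] * h \<and> coeff h 0 = (of_nat a :: int)"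
proof -
  define r where "r = [:1,1:] ^ a - (1::int poly)"
  obtain c h where rc: "r = pCons c h" by (cases r) auto
  have "coeff r 0 = 0" unfolding r_def by (simp add: coeff_lin_pow)
  then have c0: "c = 0" using rc by simp
  have "coeff h 0 = coeff r 1" using rc by simp
  also have "\<dots> = of_nat a" unfolding r_def by (simp add: coeff_lin_pow)
  finally show ?thesis using rc c0 r_def by auto
qed

lemma pcomp_monom1: "pcompose (monom (1::int) a) [:1,1:] = [:1,1:] ^ a"
  by (simp add: monom1_pow pcompose_power pcompose_pCons)

lemma Pc_taylor:
  assumes F: "F = [:-1,1:]^k * f" and d: "d > 0"
  shows "\<exists>W. pcompose (Pc F d) [:1,1:] = monom 1 (k+1) * W \<and> coeff W 0 = poly f 1
     \<and> coeff W 1 = poly f 1 * (int d ^ k * (int d - 1)^2 + 2) + coeff (pcompose f [:1,1:]) 1"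
proof -
  define x :: "int poly" where "x = [:0,1:]"
  define q :: "int poly" where "q = [:1,1:] ^ d"
  define g where "g = pcompose f [:1,1:]"
  define fq where "fq = pcompose f q"
  obtain h where h: "q - 1 = x * h" "coeff h 0 = int d" using shift_ex[of d] unfolding q_def x_def by auto
  obtain h' where h': "[:1,1:] ^ (d-1) - 1 = x * h'" "coeff h' 0 = int (d - 1)" using shift_ex[of "d-1"] unfolding x_def by auto
  have lin: "pcompose [:-1,1:] r = r - 1" for r :: "int poly"
    by (simp add: pcompose_pCons one_pCons)
  have TG: "pcompose (pcompose F (monom 1 d)) [:1,1:] = (x * h) ^ k * fq"
  proof -
    have "pcompose (pcompose F (monom 1 d)) [:1,1:] = pcompose F q"
      by (simp add: pcompose_assoc[symmetric] pcomp_monom1 q_def)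
    also have "\<dots> = (q - 1) ^ k * fq"
      by (simp add: F pcompose_mult pcompose_power lin fq_def)
    finally show ?thesis using h(1) by simp
  qed
  have TF: "pcompose F [:1,1:] = x ^ k * g"
    unfolding F pcompose_mult pcompose_power lin g_def x_def by (simp add: one_pCons)
  have Tl: "pcompose [:-1,1:] [:1,1:] = x" unfolding lin x_def by (simp add: one_pCons)
  have Tm: "pcompose (monom 1 (d-1) - 1) [:1,1:] = x * h'"
    using h'(1) by (simp add: pcompose_diff pcomp_monom1 pcompose_1)
  define W where "W = x * ([:1,1:] * h ^ k * fq * h' ^ 2) + [:1,1:] ^ 2 * g"
  have TP: "pcompose (Pc F d) [:1,1:] = monom 1 (k+1) * W"
  proof -
    have o: "[:1,1:] = 1 + x" by (simp add: x_def one_pCons)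
    have m: "monom 1 (k+1) = x ^ (k+1)" by (simp add: x_def monom1_pow)
    have "pcompose (Pc F d) [:1,1:] = [:1,1:]^1 * ((x*h)^k*fq) * (x*h')^2 + [:1,1:]^2 * x * (x^k * g)"
      unfolding Pc_factored[OF d] pcompose_add pcompose_mult pcompose_power TG TF Tl Tm pcomp_monom1
      by (rule refl)
    also have "\<dots> = monom 1 (k+1) * W"
      unfolding W_def m o
      by (simp add: power_add power2_eq_square power_mult_distrib algebra_simps)
    finally show ?thesis .
  qed
  have g0: "coeff g 0 = poly f 1" unfolding g_def by simp
  have fq0: "coeff fq 0 = poly f 1" unfolding fq_def q_def by (simp add: coeff_lin_pow)
  have W0: "coeff W 0 = poly f 1" unfolding W_def using g0
    by (simp add: coeff_mult_0 x_def coeff_lin_pow)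
  have c1: "coeff ([:1,1:] ^ 2 * g) 1 = coeff g 1 + 2 * coeff g 0"
    by (simp add: coeff_mult coeff_lin_pow)
  have xA: "coeff (x * A) 1 = coeff A 0" for A unfolding x_def by simp
  have dd: "int (d - 1) = int d - 1" using d by simp
  have W1: "coeff W 1 = poly f 1 * (int d ^ k * (int d - 1)^2 + 2) + coeff g 1"
    unfolding W_def coeff_add xA c1 using g0 fq0 h(2) h'(2) dd
    by (simp add: coeff_mult_0 coeff_0_power coeff_lin_pow algebra_simps)
  show ?thesis using TP W0 W1 g_def by blast
qed



lemma poly_of_int_sum:
  fixes p :: "int poly"
  assumes "degree p \<le> K"
  shows "poly (map_poly (of_int :: int \<Rightarrow> real) p) x = (\<Sum>i\<le>K. of_int (coeff p i) * x ^ i)"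
proof -
  have dg: "degree (map_poly (of_int :: int \<Rightarrow> real) p) = degree p"
    by (rule degree_map_poly) simp
  have "poly (map_poly (of_int :: int \<Rightarrow> real) p) x = (\<Sum>i\<le>degree p. of_int (coeff p i) * x ^ i)"
    by (simp add: poly_altdef dg coeff_map_poly)
  also have "\<dots> = (\<Sum>i\<le>K. of_int (coeff p i) * x ^ i)"
    using assms by (intro sum.mono_neutral_left) (auto simp: coeff_eq_0)
  finally show ?thesis .
qed

lemma root_lemma:
  fixes W :: "int poly" and v \<beta> :: int and d n k :: nat
  assumes k9: "k \<ge> 9" and d20: "d \<ge> 20"
    and W0: "coeff W 0 = v" and v0: "v \<noteq> 0"
    and W1: "coeff W 1 = v * (int d ^ k * (int d - 1)^2 + 2) + \<beta>"
    and Wb: "\<And>i. real_of_int \<bar>coeff W i\<bar> * fact (k+1+i) \<le> 2 * real (d*(n+2)) ^ (k+2+i)"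
    and bb: "real_of_int \<bar>\<beta>\<bar> * 100 \<le> real d ^ (k+2)"
    and c1: "(n+2)^(k+4) \<le> d^k" and c2: "4*(n+2) \<le> d^(k+1)"
  shows "\<exists>t>0. t \<le> 2 / real d ^ (k+2) \<and> poly (map_poly of_int W) (-t) = 0"
proof -
  define t0 :: real where "t0 = 2 / real d ^ (k+2)"
  define N :: real where "N = real (d*(n+2))"
  define Q where "Q = (\<lambda>t::real. poly (map_poly (of_int :: int \<Rightarrow> real) W) (-t))"
  define V where "V = real_of_int v"
  define B where "B = real_of_int \<beta>"
  define M where "M = degree W"
  have dpos: "real d ^ (k+2) > 0" using d20 by simp
  have t0pos: "t0 > 0" unfolding t0_def using dpos by simp
  have N0: "N \<ge> 0" unfolding N_def by simp
  have Qexp: "Q t = V - (V * (real d ^ k * (real d - 1)^2 + 2) + B) * t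
      + (\<Sum>i\<le>M. of_int (coeff W (i+2)) * (-t) ^ (i+2))" for t
  proof -
    have "Q t = (\<Sum>i\<le>Suc (Suc M). of_int (coeff W i) * (-t) ^ i)"
      unfolding Q_def by (rule poly_of_int_sum) (simp add: M_def)
    also have "\<dots> = of_int (coeff W 0) + of_int (coeff W 1) * (-t) + (\<Sum>i\<le>M. of_int (coeff W (i+2)) * (-t) ^ (i+2))"
      by (subst sum.atMost_Suc_shift)+ (simp del: sum.atMost_Suc)
    finally show ?thesis using W0 W1 unfolding V_def B_def by simp
  qed
  have Nk4: "N ^ (k+4) * t0^2 \<le> 4"
  proof -
    have "(d*(n+2))^(k+4) = d^(k+4) * (n+2)^(k+4)" by (simp only: power_mult_distrib)
    also have "\<dots> \<le> d^(k+4) * d^k" using c1 by simp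
    also have "\<dots> = d^((k+4)+k)" by (simp only: power_add)
    also have "(k+4)+k = (k+2)+(k+2)" by simp
    also have "d^((k+2)+(k+2)) = (d^(k+2))^2" by (simp only: power_add power2_eq_square)
    finally have "real ((d*(n+2))^(k+4)) \<le> real ((d^(k+2))^2)" by linarith
    then have "N ^ (k+4) \<le> (real d ^ (k+2))^2" unfolding N_def by simp
    moreover have X: "(real d ^ (k+2))^2 > 0" using dpos by (simp only: zero_less_power)
    ultimately have le1: "N ^ (k+4) / (real d ^ (k+2))^2 \<le> 1" by (simp add: divide_le_eq_1_pos)
    have "N ^ (k+4) * t0^2 = N ^ (k+4) * (4 / (real d ^ (k+2))^2)" unfolding t0_def by (simp add: power_divide)
    also have "\<dots> = 4 * (N ^ (k+4) / (real d ^ (k+2))^2)" by simp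
    finally show ?thesis using le1 by simp
  qed
  have Nt: "N * t0 \<le> 1/2"
  proof -
    have "4 * (d*(n+2)) = d * (4*(n+2))" by (simp only: mult.left_commute)
    also have "\<dots> \<le> d * d^(k+1)" using c2 by simp
    also have "\<dots> = d^(k+2)" by simp
    finally have "4 * N \<le> real d ^ (k+2)" unfolding N_def by (metis of_nat_le_iff of_nat_mult of_nat_numeral of_nat_power)
    then show ?thesis unfolding t0_def using dpos by (simp add: field_simps)
  qed
  have tailb: "\<bar>\<Sum>i\<le>M. of_int (coeff W (i+2)) * (-t0) ^ (i+2)\<bar> \<le> 16 / fact 12"
  proof -
    have trm: "\<bar>of_int (coeff W (i+2)) * (-t0) ^ (i+2)\<bar> \<le> 8 / fact 12 * (1/2)^i" for i
    proof -
      have f12: "(fact 12 :: real) \<le> fact (k+1+(i+2))" using k9 by (intro fact_mono) simp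
      have fpos: "(fact 12 :: real) > 0" by simp
      have a: "real_of_int \<bar>coeff W (i+2)\<bar> * fact 12 \<le> 2 * N ^ (k+2+(i+2))"
        using Wb[of "i+2"] f12 unfolding N_def
        by (meson abs_ge_zero mult_left_mono of_int_0_le_iff order_trans)
      have b: "N ^ (k+2+(i+2)) * t0 ^ (i+2) = (N^(k+4) * t0^2) * (N*t0)^i"
      proof -
        have ex: "k+2+(i+2) = (k+4)+i" by simp
        show ?thesis unfolding ex power_add power_mult_distrib by (simp only: mult_ac)
      qed
      have c: "(N*t0)^i \<le> (1/2)^i" using Nt N0 t0pos by (intro power_mono) auto
      have e: "(N^(k+4) * t0^2) * (N*t0)^i \<le> 4 * (1/2)^i"
        using Nk4 c by (intro mult_mono) (auto simp: N0 t0pos less_imp_le)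
      have ae: "\<bar>of_int (coeff W (i+2)) * (-t0) ^ (i+2)\<bar> = real_of_int \<bar>coeff W (i+2)\<bar> * t0 ^ (i+2)"
        using t0pos by (simp add: abs_mult power_abs)
      have a2: "(real_of_int \<bar>coeff W (i+2)\<bar> * fact 12) * t0^(i+2) \<le> (2 * N ^ (k+2+(i+2))) * t0^(i+2)"
        by (rule mult_right_mono[OF a]) (simp add: less_imp_le t0pos)
      have a3: "(2 * N ^ (k+2+(i+2))) * t0^(i+2) = 2 * ((N^(k+4) * t0^2) * (N*t0)^i)"
        using b by simp
      have a4: "2 * ((N^(k+4) * t0^2) * (N*t0)^i) \<le> 2 * (4 * (1/2)^i)" by (rule mult_left_mono[OF e]) simp
      have "(real_of_int \<bar>coeff W (i+2)\<bar> * t0 ^ (i+2)) * fact 12 \<le> 8 * (1/2)^i"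
        using a2 a3 a4 by (simp add: mult_ac)
      then show ?thesis unfolding ae using fpos by (simp add: field_simps)
    qed
    have "\<bar>\<Sum>i\<le>M. of_int (coeff W (i+2)) * (-t0) ^ (i+2)\<bar> \<le> (\<Sum>i\<le>M. 8 / fact 12 * (1/2::real)^i)"
      by (rule order_trans[OF sum_abs]) (intro sum_mono trm)
    also have "\<dots> = 8 / fact 12 * (\<Sum>i\<le>M. (1/2::real)^i)" by (simp add: sum_distrib_left)
    also have "(\<Sum>i\<le>M. (1/2::real)^i) \<le> 2"
    proof -
      have "(\<Sum>i\<le>M. (1/2::real)^i) \<le> suminf (\<lambda>i. (1/2::real)^i)"
        by (intro sum_le_suminf summable_geometric) auto
      also have "\<dots> = 2" by (subst suminf_geometric) auto
      finally show ?thesis .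
    qed
    then have "8 / fact 12 * (\<Sum>i\<le>M. (1/2::real)^i) \<le> 8 / fact 12 * 2"
      by (intro mult_left_mono) auto
    finally show ?thesis by simp
  qed
  have At: "(real d ^ k * (real d - 1)^2) * t0 \<ge> (9/5)"
  proof -
    have dr: "real d \<ge> 20" using d20 by simp
    have h0: "0 \<le> real d * (real d - 20)" using dr by simp
    have "2 * (real d - 1)^2 - (9/5) * real d ^ 2 = (1/5) * (real d * (real d - 20)) + 2"
      by (simp add: power2_eq_square algebra_simps)
    then have h1: "(9/5) * real d ^ 2 \<le> 2 * (real d - 1)^2" using h0 by linarith
    have h2: "real d ^ k * ((9/5) * real d ^ 2) \<le> real d ^ k * (2 * (real d - 1)^2)"
      by (rule mult_left_mono[OF h1]) simp
    have "(9/5) * real d ^ (k+2) = real d ^ k * ((9/5) * real d ^ 2)" by (simp only: power_add mult_ac)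
    also have "\<dots> \<le> real d ^ k * (2 * (real d - 1)^2)" by (rule h2)
    also have "\<dots> = 2 * real d ^ k * (real d - 1)^2" by (simp only: mult_ac)
    finally have h3: "2 * real d ^ k * (real d - 1)^2 \<ge> (9/5) * real d ^ (k+2)" .
    have "(real d ^ k * (real d - 1)^2) * t0 = (2 * real d ^ k * (real d - 1)^2) / real d ^ (k+2)"
      unfolding t0_def by (simp add: mult_ac)
    also have "(9/5) \<le> \<dots>" by (subst pos_le_divide_eq[OF dpos]) (rule h3)
    finally show ?thesis .
  qed
  have Bt: "\<bar>B\<bar> * t0 \<le> (1/50)"
    using bb dpos unfolding t0_def B_def by (simp add: field_simps)
  have V1: "\<bar>V\<bar> \<ge> 1" using v0 unfolding V_def by simp
  have f12: "16 / fact 12 \<le> ((1/100)::real)" by (simp add: fact_numeral)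
  have neg: "V * Q t0 < 0"
  proof -
    define tl where "tl = (\<Sum>i\<le>M. of_int (coeff W (i+2)) * (-t0) ^ (i+2))"
    define A where "A = real d ^ k * (real d - 1)^2"
    have "V * Q t0 = V^2 - V^2 * (A * t0) - V^2 * 2 * t0 - V * B * t0 + V * tl"
      unfolding Qexp tl_def A_def by (simp add: algebra_simps power2_eq_square)
    moreover have "V^2 * (A * t0) \<ge> V^2 * (9/5)" using At unfolding A_def by (intro mult_left_mono) auto
    moreover have "V^2 * 2 * t0 \<ge> 0" using t0pos by simp
    moreover have "\<bar>V * B * t0\<bar> \<le> \<bar>V\<bar> * (1/50)"
    proof -
      have "\<bar>V * B * t0\<bar> = \<bar>V\<bar> * (\<bar>B\<bar> * t0)" using t0pos by (simp add: abs_mult mult_ac)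
      also have "\<dots> \<le> \<bar>V\<bar> * (1/50)" by (rule mult_left_mono[OF Bt]) simp
      finally show ?thesis .
    qed
    moreover have "\<bar>V * tl\<bar> \<le> \<bar>V\<bar> * (1/100)"
    proof -
      have tl1: "\<bar>tl\<bar> \<le> (1/100)" using tailb f12 unfolding tl_def by linarith
      have "\<bar>V * tl\<bar> = \<bar>V\<bar> * \<bar>tl\<bar>" by (simp add: abs_mult)
      also have "\<dots> \<le> \<bar>V\<bar> * (1/100)" by (rule mult_left_mono[OF tl1]) simp
      finally show ?thesis .
    qed
    moreover have "V^2 \<ge> \<bar>V\<bar>"
    proof -
      have "\<bar>V\<bar> * 1 \<le> \<bar>V\<bar> * \<bar>V\<bar>" by (rule mult_left_mono[OF V1]) simp
      moreover have "V^2 = \<bar>V\<bar> * \<bar>V\<bar>" by (simp add: power2_eq_square abs_mult_self_eq)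
      ultimately show ?thesis by simp
    qed
    ultimately show ?thesis using V1 abs_ge_self[of "V*B*t0"] abs_ge_minus_self[of "V*B*t0"]
        abs_ge_self[of "V*tl"] abs_ge_minus_self[of "V*tl"] by linarith
  qed
  have Q0: "Q 0 = V" using Qexp[of 0] by simp
  have VV: "V * V > 0" using V1 by (cases "V > 0") (auto simp: mult_neg_neg)
  have pos: "V * Q 0 > 0" using Q0 VV by simp
  have cont: "continuous_on {0..t0} (\<lambda>t. V * Q t)" unfolding Q_def by (intro continuous_intros)
  obtain t where t: "0 \<le> t" "t \<le> t0" "V * Q t = 0"
    using IVT2'[of "\<lambda>t. V * Q t" t0 0 0] neg pos t0pos cont by fastforce
  have "Q t = 0" using t(3) V1 by auto
  moreover have "t \<noteq> 0" using \<open>Q t = 0\<close> pos by auto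
  ultimately show ?thesis using t unfolding Q_def t0_def by (intro exI[of _ t]) auto
qed

lemma taylor_bound:
  fixes P :: "int poly"
  assumes cP: "\<And>i. \<bar>coeff P i\<bar> \<le> 2"
  shows "real_of_int \<bar>coeff (pcompose P [:1,1:]) r\<bar> * fact r \<le> 2 * real (degree P + 1) ^ (r+1)"
proof -
  define D where "D = degree P"
  have "\<bar>coeff (pcompose P [:1,1:]) r\<bar> \<le> (\<Sum>j\<le>D. 2 * int (j choose r))"
  proof -
    have "\<bar>coeff (pcompose P [:1,1:]) r\<bar> = \<bar>\<Sum>j\<le>D. coeff P j * int (j choose r)\<bar>"
      unfolding coeff_taylor D_def by simp
    also have "\<dots> \<le> (\<Sum>j\<le>D. \<bar>coeff P j * int (j choose r)\<bar>)" by (rule sum_abs)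
    also have "\<dots> \<le> (\<Sum>j\<le>D. 2 * int (j choose r))"
      by (intro sum_mono) (simp add: abs_mult mult_right_mono cP)
    finally show ?thesis .
  qed
  then have a0: "real_of_int \<bar>coeff (pcompose P [:1,1:]) r\<bar> \<le> real_of_int (\<Sum>j\<le>D. 2 * int (j choose r))"
    by (simp only: of_int_le_iff)
  have a1: "real_of_int (\<Sum>j\<le>D. 2 * int (j choose r)) = (\<Sum>j\<le>D. 2 * real (j choose r))"
    by simp
  have a: "real_of_int \<bar>coeff (pcompose P [:1,1:]) r\<bar> \<le> (\<Sum>j\<le>D. 2 * real (j choose r))"
    using a0 a1 by simp
  have b: "real (j choose r) * fact r \<le> real D ^ r" if "j \<le> D" for j
  proof -
    have "(j choose r) * fact r \<le> j ^ r" by (rule binomial_fact_pow)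
    also have "\<dots> \<le> D ^ r" using that by (rule power_mono) simp
    finally have "real ((j choose r) * fact r) \<le> real (D ^ r)" by (simp only: of_nat_le_iff)
    then show ?thesis by (simp add: of_nat_fact)
  qed
  have "real_of_int \<bar>coeff (pcompose P [:1,1:]) r\<bar> * fact r \<le> (\<Sum>j\<le>D. 2 * real (j choose r)) * fact r"
    using a by (rule mult_right_mono) simp
  also have "\<dots> = (\<Sum>j\<le>D. 2 * (real (j choose r) * fact r))" by (simp add: sum_distrib_right mult.assoc)
  also have "\<dots> \<le> (\<Sum>j\<le>D. 2 * real D ^ r)" by (intro sum_mono) (use b in simp)
  also have "\<dots> = 2 * (real D + 1) * real D ^ r" by simp
  also have "\<dots> \<le> 2 * (real D + 1) * (real D + 1) ^ r" by (intro mult_left_mono power_mono) auto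
  also have "\<dots> = 2 * ((real D + 1) * (real D + 1) ^ r)" by (simp only: mult.assoc)
  also have "\<dots> = 2 * real (D + 1) ^ (r+1)" by (simp only: of_nat_add of_nat_1 power_add power_one_right mult_ac)
  finally show ?thesis unfolding D_def .
qed

lemma numeric_facts:
  fixes d n k :: nat
  assumes k9: "k \<ge> 9" and n9: "n \<ge> 9" and dn: "(n+2)^3 \<le> d^2"
  shows "3*(n+2) \<le> d" "d \<ge> 20" "(n+2)^(k+4) \<le> d^k" "4*(n+2) \<le> d^(k+1)"
    "100 * (n+1)^(k+2) \<le> d^(k+2)"
proof -
  have "(3*(n+2))^2 = 9 * (n+2)^2" by (simp only: power_mult_distrib) simp
  also have "\<dots> \<le> (n+2) * (n+2)^2" using n9 by (intro mult_right_mono) auto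
  also have "\<dots> = (n+2)^3" by (simp add: power2_eq_square power3_eq_cube)
  also have "\<dots> \<le> d^2" by (rule dn)
  finally show d3: "3*(n+2) \<le> d" by (rule power2_le_imp_le) simp
  then show d20: "d \<ge> 20" using n9 by simp
  have "((n+2)^(k+4))^2 = (n+2)^(2*k+8)" by (simp add: power_mult[symmetric] algebra_simps)
  also have "\<dots> \<le> (n+2)^(3*k)" using k9 by (intro power_increasing) auto
  also have "\<dots> = ((n+2)^3)^k" by (simp add: power_mult)
  also have "\<dots> \<le> (d^2)^k" using dn by (rule power_mono) simp
  also have "\<dots> = (d^k)^2" by (simp add: power_mult[symmetric] mult.commute)
  finally show "(n+2)^(k+4) \<le> d^k" by (rule power2_le_imp_le) simp
  have "4*(n+2) \<le> (n+2)^3" using n9 by (simp add: power3_eq_cube)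
  also have "\<dots> \<le> d^2" by (rule dn)
  also have "\<dots> \<le> d^(k+1)" using d20 k9 by (intro power_increasing) auto
  finally show "4*(n+2) \<le> d^(k+1)" .
  have "100 \<le> (3::nat)^(k+2)"
  proof -
    have "(100::nat) \<le> 3^5" by simp
    also have "\<dots> \<le> 3^(k+2)" using k9 by (intro power_increasing) auto
    finally show ?thesis .
  qed
  then have "100 * (n+1)^(k+2) \<le> 3^(k+2) * (n+1)^(k+2)" by (rule mult_right_mono) simp
  also have "\<dots> = (3*(n+1))^(k+2)" by (simp only: power_mult_distrib)
  also have "\<dots> \<le> d^(k+2)" using d3 by (intro power_mono) auto
  finally show "100 * (n+1)^(k+2) \<le> d^(k+2)" .
qed

theorem lemma4p7:
  fixes F f :: "int poly" and k :: nat
  assumes coeffsF: "\<forall>i. coeff F i \<in> {-1, 0, 1}"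
    and factor: "F = [:-1, 1:] ^ k * f"
    and k9: "k \<ge> 9"
    and f1: "poly f 1 \<noteq> 0"
  shows "\<forall>d::nat. d > 0 \<and> real d \<ge> (real (degree F) + 2) powr (3/2) \<longrightarrow>
    (\<exists>P :: int poly. degree P = d * (degree F + 2) - 1
        \<and> (\<forall>i. coeff P i \<in> {-2, -1, 0, 1, 2})
        \<and> (\<exists>\<alpha>::real. \<alpha> < 1 \<and> poly (map_poly of_int P) \<alpha> = 0
              \<and> \<bar>1 - \<alpha>\<bar> \<le> 2 * real d powr (- (real k + 2))))"
proof (intro allI impI)
  fix d :: nat
  assume dA: "d > 0 \<and> real d \<ge> (real (degree F) + 2) powr (3/2)"
  define n where "n = degree F"
  have d0: "d > 0" using dA by simp
  have f0: "f \<noteq> 0" using f1 by auto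
  have F0: "F \<noteq> 0" using f0 unfolding factor by simp
  have degF: "n = k + degree f" unfolding n_def factor using f0
    by (simp add: degree_mult_eq degree_linear_power)
  have n9: "n \<ge> 9" using degF k9 by simp
  have dn: "(n+2)^3 \<le> d^2"
  proof -
    have pos: "real n + 2 > 0" by simp
    have h: "(real n + 2) powr (3/2) \<le> real d" using dA n_def by simp
    have "(real n + 2) ^ 3 = (real n + 2) powr (real 3)" using pos by (simp add: powr_realpow)
    also have "\<dots> = (real n + 2) powr (3/2) * (real n + 2) powr (3/2)" by (simp add: powr_add[symmetric])
    also have "\<dots> \<le> real d * real d" using h by (intro mult_mono) auto
    finally have "real ((n+2)^3) \<le> real (d^2)" by (simp add: power2_eq_square add.commute)
    then show ?thesis by (simp only: of_nat_le_iff)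
  qed
  note nf = numeric_facts[OF k9 n9 dn]
  define P where "P = Pc F d"
  have d6: "d \<ge> degree F + 6" using nf(1) n_def by simp
  have cP: "\<forall>i. coeff P i \<in> {-2, -1, 0, 1, 2}" unfolding P_def using Pc_coeff_range[OF d6 coeffsF] by blast
  have cP2: "\<bar>coeff P i\<bar> \<le> 2" for i using cP[rule_format, of i] by auto
  have degP: "degree P = d * (degree F + 2) - 1" unfolding P_def by (rule Pc_degree[OF d6 F0])
  have degP1: "degree P + 1 = d * (n + 2)" using degP d0 n_def by (simp add: algebra_simps)
  obtain W where TP: "pcompose P [:1,1:] = monom 1 (k+1) * W" and W0: "coeff W 0 = poly f 1"
    and W1: "coeff W 1 = poly f 1 * (int d ^ k * (int d - 1)^2 + 2) + coeff (pcompose f [:1,1:]) 1"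
    using Pc_taylor[OF factor d0] unfolding P_def by blast
  define \<beta> where "\<beta> = coeff (pcompose f [:1,1:]) 1"
  have Wb: "real_of_int \<bar>coeff W i\<bar> * fact (k+1+i) \<le> 2 * real (d*(n+2)) ^ (k+2+i)" for i
  proof -
    have e: "coeff W i = coeff (pcompose P [:1,1:]) (k+1+i)" unfolding TP by (simp add: coeff_monom_mult)
    have ex: "k+1+i+1 = k+2+i" by simp
    show ?thesis using taylor_bound[OF cP2, of "k+1+i"] unfolding degP1 ex e[symmetric] .
  qed
  have bb: "real_of_int \<bar>\<beta>\<bar> * 100 \<le> real d ^ (k+2)"
  proof -
    have TF: "pcompose F [:1,1:] = monom 1 k * pcompose f [:1,1:]"
      unfolding factor by (simp add: pcompose_mult pcompose_power pcompose_pCons monom1_pow one_pCons)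
    have cF2: "\<bar>coeff F i\<bar> \<le> 2" for i using coeffsF[rule_format, of i] by auto
    have "\<beta> = coeff (pcompose F [:1,1:]) (k+1)" unfolding TF \<beta>_def by (simp add: coeff_monom_mult)
    moreover have ex: "k+1+1 = k+2" by simp
    ultimately have b1: "real_of_int \<bar>\<beta>\<bar> * fact (k+1) \<le> 2 * real (n + 1) ^ (k+2)"
      using taylor_bound[OF cF2, of "k+1"] unfolding n_def ex by simp
    have "(2::real) \<le> fact (k+1)" using k9 fact_mono[of 2 "k+1"] by (simp add: fact_numeral)
    then have "real_of_int \<bar>\<beta>\<bar> * 2 \<le> real_of_int \<bar>\<beta>\<bar> * fact (k+1)" by (intro mult_left_mono) auto
    then have "real_of_int \<bar>\<beta>\<bar> \<le> real (n + 1) ^ (k+2)" using b1 by linarith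
    moreover have "100 * real (n+1) ^ (k+2) \<le> real d ^ (k+2)"
    proof -
      have "real (100 * (n+1)^(k+2)) \<le> real (d^(k+2))" using nf(5) by (simp only: of_nat_le_iff)
      then show ?thesis by (simp only: of_nat_mult of_nat_power of_nat_numeral)
    qed
    ultimately show ?thesis by linarith
  qed
  obtain t where t: "t > 0" "t \<le> 2 / real d ^ (k+2)" "poly (map_poly of_int W) (-t) = (0::real)"
    using root_lemma[OF k9 nf(2) W0 f1 W1[folded \<beta>_def] Wb bb nf(3) nf(4)] by blast
  have root: "poly (map_poly (of_int :: int \<Rightarrow> real) P) (1 - t) = 0"
  proof -
    have "poly (map_poly (of_int :: int \<Rightarrow> real) P) (1 + (-t)) = poly (map_poly of_int (pcompose P [:1,1:])) (-t)"
      by (rule poly_shift_real)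
    also have "\<dots> = 0" unfolding TP map_of_int_mult using t(3) by simp
    finally show ?thesis by simp
  qed
  have pw: "2 * real d powr (- (real k + 2)) = 2 / real d ^ (k+2)"
  proof -
    have "real d powr (real k + 2) = real d powr (real (k+2))" by (simp add: add.commute)
    also have "\<dots> = real d ^ (k+2)" by (rule powr_realpow) (use d0 in simp)
    finally have e: "real d powr (real k + 2) = real d ^ (k+2)" .
    have "real d powr (- (real k + 2)) = inverse (real d ^ (k+2))" by (simp only: powr_minus e)
    then show ?thesis by (simp only: divide_inverse)
  qed
  show "\<exists>P :: int poly. degree P = d * (degree F + 2) - 1
        \<and> (\<forall>i. coeff P i \<in> {-2, -1, 0, 1, 2})
        \<and> (\<exists>\<alpha>::real. \<alpha> < 1 \<and> poly (map_poly of_int P) \<alpha> = 0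
              \<and> \<bar>1 - \<alpha>\<bar> \<le> 2 * real d powr (- (real k + 2)))"
    using degP cP root t pw by (intro exI[of _ P] conjI exI[of _ "1 - t"]) auto
qed

end
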